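(* Let $n\ge3$ be an integer, let $(\eta_{ab})$ be a non-degenerate symmetric complex $n\times n$ matrix with inverse $(\eta^{ab})$, let $\mathscr{F}=\mathbb{C}[x^1,\dots,x^n]$ and $\mathscr{F}^+=\{\phi\in\mathscr{F}:\sum_{a,b}\eta^{ab}\partial_a\partial_b\phi=0\}$. Let $Z^\circ$ be the $\mathbb{C}$-algebra of operators on $\mathscr{F}$ generated by $$H=-\tfrac12\sum_a(x^a\partial_a+\partial_ax^a),\qquad \partial_a,\qquad \tilde x^a=x^a+\frac1{2H+4}\sum_{b,c}\eta_{bc}x^bx^c\,\partial^a\qquad(1\le a\le n).$$ Then each of these operators maps $\mathscr{F}^+$ into itself, so $\mathscr{F}^+$ is a $Z^\circ$-module, and $\mathscr{F}^+$ is irreducible as a $Z^\circ$-module.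
   Context: $\partial_a=\partial/\partial x^a$, $\partial^a=\sum_b\eta^{ab}\partial_b$. $H$ acts on homogeneous polynomials of degree $d$ by the scalar $-d-\frac n2$, and $(2H+4)^{-1}$ denotes the inverse of $2H+4$ on the (homogeneous, degree $\ge2$ when nonzero) polynomial $\sum_{b,c}\eta_{bc}x^bx^c\partial^a\psi$; explicitly $\tilde x^a\psi=x^a\psi+\frac1{2-2d-n}\sum_{b,c}\eta_{bc}x^bx^c\partial^a\psi$ for $\psi$ homogeneous of degree $d\ge1$ and $\tilde x^a\psi=x^a\psi$ for constant $\psi$. Irreducible means the only $Z^\circ$-invariant subspaces of $\mathscr{F}^+$ are $0$ and $\mathscr{F}^+$. *)

theory Defs
  imports "HOL-Analysis.Analysis"
begin

text \<open>A polynomial in C[x^a : a in 'n] is represented by its coefficient function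
  c :: ('n => nat) => complex (exponent vector to coefficient); the polynomial
  space F is the set of finitely supported coefficient functions.
  Operators act on all coefficient functions.\<close>

type_synonym 'n coeffs = "('n \<Rightarrow> nat) \<Rightarrow> complex"

definition polys :: "'n coeffs set" where
  "polys = {c. finite {m. c m \<noteq> 0}}"

definition mdeg :: "('n::finite \<Rightarrow> nat) \<Rightarrow> nat" where
  "mdeg m = (\<Sum>i\<in>UNIV. m i)"

definition Xop :: "'n \<Rightarrow> 'n coeffs \<Rightarrow> 'n coeffs" where
  "Xop a c = (\<lambda>m. if 0 < m a then c (m(a := m a - 1)) else 0)"

definition Dop :: "'n \<Rightarrow> 'n coeffs \<Rightarrow> 'n coeffs" where
  "Dop a c = (\<lambda>m. of_nat (m a + 1) * c (m(a := m a + 1)))"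

definition Dup :: "complex^'n^'n \<Rightarrow> 'n::finite \<Rightarrow> 'n coeffs \<Rightarrow> 'n coeffs" where
  "Dup eta a c = (\<lambda>m. \<Sum>b\<in>UNIV. (matrix_inv eta $ a $ b) * Dop b c m)"

definition Hop :: "'n::finite coeffs \<Rightarrow> 'n coeffs" where
  "Hop c = (\<lambda>m. - (1/2) * (\<Sum>a\<in>UNIV. Xop a (Dop a c) m + Dop a (Xop a c) m))"

definition Qop :: "complex^'n^'n \<Rightarrow> 'n::finite coeffs \<Rightarrow> 'n coeffs" where
  "Qop eta f = (\<lambda>m. \<Sum>b\<in>UNIV. \<Sum>c\<in>UNIV. eta $ b $ c * Xop b (Xop c f) m)"

text \<open>(2H+4)^{-1}: 2H+4 acts on degree-d monomials by 4 - 2d - n; its inverse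
  divides by this scalar (only applied to polynomials on which it is nonzero).\<close>
definition R2H4inv :: "'n::finite coeffs \<Rightarrow> 'n coeffs" where
  "R2H4inv f = (\<lambda>m. f m / (4 - 2 * of_nat (mdeg m) - of_nat CARD('n)))"

definition Xtil :: "complex^'n^'n \<Rightarrow> 'n::finite \<Rightarrow> 'n coeffs \<Rightarrow> 'n coeffs" where
  "Xtil eta a f = (\<lambda>m. Xop a f m + R2H4inv (Qop eta (Dup eta a f)) m)"

definition Lap :: "complex^'n^'n \<Rightarrow> 'n::finite coeffs \<Rightarrow> 'n coeffs" where
  "Lap eta f = (\<lambda>m. \<Sum>a\<in>UNIV. \<Sum>b\<in>UNIV. matrix_inv eta $ a $ b * Dop a (Dop b f) m)"

definition Fplus :: "complex^'n^'n \<Rightarrow> 'n::finite coeffs set" where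
  "Fplus eta = {f \<in> polys. Lap eta f = (\<lambda>m. 0)}"

inductive_set Zalg :: "complex^'n^'n \<Rightarrow> ('n::finite coeffs \<Rightarrow> 'n coeffs) set"
  for eta :: "complex^'n^'n" where
  gen_H: "Hop \<in> Zalg eta"
| gen_D: "Dop a \<in> Zalg eta"
| gen_X: "Xtil eta a \<in> Zalg eta"
| unit: "(\<lambda>f. f) \<in> Zalg eta"
| add: "S \<in> Zalg eta \<Longrightarrow> T \<in> Zalg eta \<Longrightarrow> (\<lambda>f m. S f m + T f m) \<in> Zalg eta"
| smult: "T \<in> Zalg eta \<Longrightarrow> (\<lambda>f m. k * T f m) \<in> Zalg eta"
| comp: "S \<in> Zalg eta \<Longrightarrow> T \<in> Zalg eta \<Longrightarrow> (\<lambda>f. S (T f)) \<in> Zalg eta"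

definition csubspace :: "'n coeffs set \<Rightarrow> bool" where
  "csubspace W \<longleftrightarrow> (\<lambda>m. 0) \<in> W \<and> (\<forall>f\<in>W. \<forall>g\<in>W. (\<lambda>m. f m + g m) \<in> W)
     \<and> (\<forall>k. \<forall>f\<in>W. (\<lambda>m. k * f m) \<in> W)"

end

theory Submission
  imports Defs
begin



lemma inv_facts:
  fixes eta :: "complex^'n::finite^'n"
  assumes inv: "invertible eta" and sym: "transpose eta = eta"
  shows "\<And>b d. (\<Sum>c\<in>UNIV. eta$b$c * matrix_inv eta$c$d) = (if b = d then 1 else 0)"
    and "\<And>a b. matrix_inv eta$a$b = matrix_inv eta$b$a"
    and "\<And>a b. eta$a$b = eta$b$a"
proof -
  have r: "eta ** matrix_inv eta = mat 1" and l: "matrix_inv eta ** eta = mat 1"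
    using someI_ex[OF inv[unfolded invertible_def]] unfolding matrix_inv_def by auto
  show "\<And>b d. (\<Sum>c\<in>UNIV. eta$b$c * matrix_inv eta$c$d) = (if b = d then 1 else 0)"
    using r by (simp add: matrix_matrix_mult_def mat_def vec_eq_iff)
  have "transpose (matrix_inv eta) ** eta = mat 1"
    using arg_cong[OF r, of transpose] sym by (simp add: matrix_transpose_mul transpose_mat)
  then have "transpose (matrix_inv eta) = matrix_inv eta"
  proof -
    assume t: "transpose (matrix_inv eta) ** eta = mat 1"
    have "transpose (matrix_inv eta) = transpose (matrix_inv eta) ** (eta ** matrix_inv eta)"
      by (simp add: r matrix_mul_rid)
    also have "\<dots> = (transpose (matrix_inv eta) ** eta) ** matrix_inv eta"
      by (simp add: matrix_mul_assoc)
    also have "\<dots> = matrix_inv eta" by (simp add: t matrix_mul_lid)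
    finally show ?thesis .
  qed
  note tt = this
  show "\<And>a b. matrix_inv eta$a$b = matrix_inv eta$b$a"
  proof -
    fix a b
    have "transpose (matrix_inv eta) $ a $ b = matrix_inv eta $ a $ b" using tt by simp
    then show "matrix_inv eta$a$b = matrix_inv eta$b$a" by (simp add: transpose_def)
  qed
  show "\<And>a b. eta$a$b = eta$b$a"
  proof -
    fix a b
    have "transpose eta $ a $ b = eta $ a $ b" using sym by simp
    then show "eta$a$b = eta$b$a" by (simp add: transpose_def)
  qed
qed

lemma mdeg_upd: "mdeg (m(a := v)) + m a = mdeg m + (v::nat)"
proof -
  have "mdeg (m(a := v)) = v + (\<Sum>i\<in>UNIV-{a}. m i)"
    unfolding mdeg_def by (simp add: sum.remove[of UNIV a])
  moreover have "mdeg m = m a + (\<Sum>i\<in>UNIV-{a}. m i)"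
    unfolding mdeg_def by (simp add: sum.remove[of UNIV a])
  ultimately show ?thesis by simp
qed

lemma mdeg_Suc: "mdeg (m(a := m a + 1)) = mdeg m + 1"
  using mdeg_upd[of m a "m a + 1"] by simp

lemma mdeg_Suc': "mdeg (m(a := Suc (m a))) = Suc (mdeg m)"
  using mdeg_Suc[of m a] by simp

lemma if_mult_simps: "(if P then 1 else 0) * (y::complex) = (if P then y else 0)"
   "x * (if P then y else 0) = (if P then x * y else (0::complex))"
  by simp_all

lemma Dop_sum: "Dop a (\<lambda>m. \<Sum>i\<in>A. F i m) = (\<lambda>m. \<Sum>i\<in>A. Dop a (F i) m)"
  by (simp add: Dop_def sum_distrib_left)
lemma Dop_add: "Dop a (\<lambda>m. f m + g m) = (\<lambda>m. Dop a f m + Dop a g m)"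
  by (simp add: Dop_def distrib_left)
lemma Dop_scale: "Dop a (\<lambda>m. k * f m) = (\<lambda>m. k * Dop a f m)"
  by (simp add: Dop_def mult_ac)
lemma Xop_sum: "Xop a (\<lambda>m. \<Sum>i\<in>A. F i m) = (\<lambda>m. \<Sum>i\<in>A. Xop a (F i) m)"
  by (simp add: Xop_def fun_eq_iff)
lemma Xop_add: "Xop a (\<lambda>m. f m + g m) = (\<lambda>m. Xop a f m + Xop a g m)"
  by (simp add: Xop_def fun_eq_iff)
lemma Xop_scale: "Xop a (\<lambda>m. k * f m) = (\<lambda>m. k * Xop a f m)"
  by (simp add: Xop_def fun_eq_iff)
lemma Xop_zero: "Xop a (\<lambda>m. 0) = (\<lambda>m. 0)"
  by (simp add: Xop_def fun_eq_iff)
lemma Dop_zero: "Dop a (\<lambda>m. 0) = (\<lambda>m. 0)"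
  by (simp add: Dop_def fun_eq_iff)

lemma XD: "Xop a (Dop a f) m = of_nat (m a) * f m"
  by (auto simp: Xop_def Dop_def)




lemma DX: "Dop a (Xop b f) m = Xop b (Dop a f) m + (if a = b then f m else 0)"
proof (cases "a = b")
  case True
  then show ?thesis
    by (cases "m a") (auto simp: Xop_def Dop_def algebra_simps fun_upd_idem)
next
  case False
  then show ?thesis
    by (auto simp: Xop_def Dop_def fun_upd_twist)
qed

lemma DD: "Dop a (Dop b f) = Dop b (Dop a f)"
proof (cases "a = b")
  case False
  then show ?thesis by (simp add: Dop_def fun_eq_iff fun_upd_twist)
qed simp

definition dl :: "'n \<Rightarrow> 'n \<Rightarrow> complex" where "dl a b = (if a = b then 1 else 0)"

lemma DXf: "Dop a (Xop b f) = (\<lambda>m. Xop b (Dop a f) m + dl a b * f m)"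
  by (simp add: fun_eq_iff DX dl_def)

lemma sum_dl_in: "(\<Sum>b\<in>UNIV. x b * (dl b (c::'n::finite) * (y::complex))) = x c * y"
  by (simp add: dl_def if_mult_simps sum.delta sum.delta')

lemma sum_swap_dl: "(\<Sum>a\<in>UNIV. \<Sum>b\<in>UNIV. x a b * (dl a (c::'n::finite) * (y b::complex))) = (\<Sum>b\<in>UNIV. x c b * y b)"
  by (subst sum.swap) (simp add: dl_def if_mult_simps sum.delta sum.delta')




lemma Lap_sum: "Lap eta (\<lambda>m. \<Sum>i\<in>A. F i m) = (\<lambda>m. \<Sum>i\<in>A. Lap eta (F i) m)"
  by (simp add: Lap_def Dop_sum sum_distrib_left fun_eq_iff sum.swap[of _ UNIV A])
lemma Lap_add: "Lap eta (\<lambda>m. f m + g m) = (\<lambda>m. Lap eta f m + Lap eta g m)"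
  by (simp add: Lap_def Dop_add distrib_left sum.distrib fun_eq_iff)
lemma Lap_scale: "Lap eta (\<lambda>m. k * f m) = (\<lambda>m. k * Lap eta f m)"
  by (simp add: Lap_def Dop_scale sum_distrib_left fun_eq_iff mult_ac)

lemma Qop_sum: "Qop eta (\<lambda>m. \<Sum>i\<in>A. F i m) = (\<lambda>m. \<Sum>i\<in>A. Qop eta (F i) m)"
  by (simp add: Qop_def Xop_sum sum_distrib_left fun_eq_iff sum.swap[of _ UNIV A])
lemma Qop_zero: "Qop eta (\<lambda>m. 0) = (\<lambda>m. 0)"
  by (simp add: Qop_def Xop_zero)
lemma R2_sum: "R2H4inv (\<lambda>m. \<Sum>i\<in>A. F i m) = (\<lambda>m. \<Sum>i\<in>A. R2H4inv (F i) m)"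
  by (simp add: R2H4inv_def sum_divide_distrib)

lemma Dop_degscale: "Dop a (\<lambda>m. s (mdeg m) * f m) = (\<lambda>m. s (mdeg m + 1) * Dop a f m)"
  by (simp add: Dop_def mdeg_Suc mdeg_Suc' mult_ac)

lemma Lap_degscale: "Lap eta (\<lambda>m. s (mdeg m) * f m) = (\<lambda>m. s (mdeg m + 2) * Lap eta f m)"
proof -
  have i: "\<And>b. Dop b (\<lambda>m. s (mdeg m) * f m) = (\<lambda>m. s (mdeg m + 1) * Dop b f m)"
    by (rule Dop_degscale)
  have o: "\<And>a g. Dop a (\<lambda>m. s (mdeg m + 1) * g m) = (\<lambda>m. s (mdeg m + 2) * Dop a g m)"
    using Dop_degscale[of _ "\<lambda>d. s (d+1)"] by (simp add: add.assoc)
  have "\<And>a b. Dop a (Dop b (\<lambda>m. s (mdeg m) * f m)) = (\<lambda>m. s (mdeg m + 2) * Dop a (Dop b f) m)"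
    by (simp only: i o)
  then show ?thesis by (simp add: Lap_def sum_distrib_left mult_ac)
qed

lemma Hop_eq: "Hop (f :: 'n::finite coeffs) = (\<lambda>m. (- (of_nat (mdeg m) + of_nat CARD('n) / 2)) * f m)"
proof
  fix m :: "'n \<Rightarrow> nat"
  have pa: "\<And>a. Xop a (Dop a f) m + Dop a (Xop a f) m = (2 * of_nat (m a) + 1) * f m"
    by (simp add: XD DX algebra_simps)
  have "Hop f m = - (1/2) * (\<Sum>a\<in>UNIV. (2 * of_nat (m a) + 1) * f m)"
    by (simp add: Hop_def pa)
  also have "(\<Sum>a\<in>UNIV. (2 * of_nat (m a) + 1) * f m) = (\<Sum>a\<in>UNIV. 2 * of_nat (m a) + 1) * f m"
    by (rule sum_distrib_right[symmetric])
  also have "(\<Sum>a\<in>UNIV. 2 * of_nat (m a) + (1::complex)) = 2 * of_nat (mdeg m) + of_nat CARD('n)"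
    by (simp add: sum.distrib sum_distrib_left[symmetric] mdeg_def)
  finally show "Hop f m = (- (of_nat (mdeg m) + of_nat CARD('n) / 2)) * f m"
    by (simp add: algebra_simps)
qed

lemma R2_eq: "R2H4inv (g :: 'n::finite coeffs) = (\<lambda>m. (1 / (4 - 2 * of_nat (mdeg m) - of_nat CARD('n))) * g m)"
  by (simp add: R2H4inv_def fun_eq_iff)




lemma Lap_Xop:
  assumes symI: "\<And>a b. matrix_inv eta$a$b = matrix_inv eta$b$a"
  shows "Lap eta (Xop c f) = (\<lambda>m. Xop c (Lap eta f) m + 2 * Dup eta c f m)"
proof -
  have 1: "\<And>a b. Dop a (Dop b (Xop c f)) = (\<lambda>k. Xop c (Dop a (Dop b f)) k + dl a c * Dop b f k + dl b c * Dop a f k)"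
    by (simp add: DXf Dop_add Dop_scale add.assoc)
  have 2: "Xop c (Lap eta f) = (\<lambda>m. \<Sum>a\<in>UNIV. \<Sum>b\<in>UNIV. matrix_inv eta $ a $ b * Xop c (Dop a (Dop b f)) m)"
    by (simp add: Lap_def Xop_sum Xop_scale)
  show ?thesis
  proof
    fix m
    have "Lap eta (Xop c f) m = (\<Sum>a\<in>UNIV. \<Sum>b\<in>UNIV. matrix_inv eta $ a $ b * Xop c (Dop a (Dop b f)) m)
        + (\<Sum>a\<in>UNIV. \<Sum>b\<in>UNIV. matrix_inv eta $ a $ b * (dl a c * Dop b f m))
        + (\<Sum>a\<in>UNIV. \<Sum>b\<in>UNIV. matrix_inv eta $ a $ b * (dl b c * Dop a f m))"
      by (simp add: Lap_def 1 distrib_left sum.distrib)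
    also have "\<dots> = Xop c (Lap eta f) m + (\<Sum>b\<in>UNIV. matrix_inv eta $ c $ b * Dop b f m)
        + (\<Sum>a\<in>UNIV. matrix_inv eta $ a $ c * Dop a f m)"
      by (simp only: 2 sum_swap_dl sum_dl_in)
    also have "\<dots> = Xop c (Lap eta f) m + 2 * Dup eta c f m"
    proof -
      have sw: "\<And>a. matrix_inv eta $ a $ c * Dop a f m = matrix_inv eta $ c $ a * Dop a f m"
        using symI by metis
      show ?thesis by (simp only: sw Dup_def mult_2 add.assoc)
    qed
    finally show "Lap eta (Xop c f) m = Xop c (Lap eta f) m + 2 * Dup eta c f m" .
  qed
qed

lemma Euler0: "(\<Sum>a\<in>UNIV. Xop a (Dop a f) m) = of_nat (mdeg m) * f m"
  by (simp add: XD mdeg_def sum_distrib_right)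

lemma DupX: "Dup eta b (Xop c g) m = Xop c (Dup eta b g) m + matrix_inv eta $ b $ c * g m"
proof -
  have "(\<Sum>d\<in>UNIV. matrix_inv eta $ b $ d * (dl d c * g m)) = matrix_inv eta $ b $ c * g m"
    by (simp add: dl_def if_mult_simps sum.delta sum.delta')
  then show ?thesis
    by (simp add: Dup_def DXf distrib_left sum.distrib Xop_sum Xop_scale)
qed

lemma Lap_Dop: "Lap eta (Dop c f) = Dop c (Lap eta f)"
proof -
  have "\<And>a b. Dop a (Dop b (Dop c f)) = Dop c (Dop a (Dop b f))"
    by (metis DD)
  then show ?thesis by (simp add: Lap_def Dop_sum Dop_scale)
qed




lemma Lap_Q:
  fixes eta :: "complex^'n::finite^'n"
  assumes E1: "\<And>b d. (\<Sum>c\<in>UNIV. eta$b$c * matrix_inv eta$c$d) = (if b = d then 1 else 0)"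
    and symI: "\<And>a b. matrix_inv eta$a$b = matrix_inv eta$b$a"
    and symE: "\<And>a b. eta$a$b = eta$b$a"
    and harm: "Lap eta phi = (\<lambda>m. 0)"
  shows "Lap eta (Qop eta phi) = (\<lambda>m. (2 * of_nat CARD('n) + 4 * of_nat (mdeg m)) * phi m)"
proof
  fix m
  have LX: "\<And>c g. Lap eta (Xop c g) = (\<lambda>m. Xop c (Lap eta g) m + 2 * Dup eta c g m)"
    using Lap_Xop[OF symI] by blast
  have LXX: "\<And>b c. Lap eta (Xop b (Xop c phi)) m = 2 * Xop b (Dup eta c phi) m
        + 2 * Xop c (Dup eta b phi) m + 2 * matrix_inv eta $ b $ c * phi m"
    by (simp add: LX DupX Xop_add Xop_scale Xop_zero harm algebra_simps)
  have ED: "\<And>b. (\<lambda>k. \<Sum>c\<in>UNIV. eta$b$c * Dup eta c phi k) = Dop b phi"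
  proof
    fix b k
    have "(\<Sum>c\<in>UNIV. eta$b$c * Dup eta c phi k)
        = (\<Sum>c\<in>UNIV. \<Sum>d\<in>UNIV. eta$b$c * (matrix_inv eta$c$d * Dop d phi k))"
      by (simp add: Dup_def sum_distrib_left)
    also have "\<dots> = (\<Sum>d\<in>UNIV. \<Sum>c\<in>UNIV. eta$b$c * (matrix_inv eta$c$d * Dop d phi k))"
      by (rule sum.swap)
    also have "\<dots> = (\<Sum>d\<in>UNIV. (\<Sum>c\<in>UNIV. eta$b$c * matrix_inv eta$c$d) * Dop d phi k)"
      by (simp add: sum_distrib_right mult.assoc)
    also have "\<dots> = Dop b phi k"
      by (simp add: E1 if_mult_simps sum.delta sum.delta')
    finally show "(\<Sum>c\<in>UNIV. eta$b$c * Dup eta c phi k) = Dop b phi k" .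
  qed
  have T1: "(\<Sum>b\<in>UNIV. \<Sum>c\<in>UNIV. eta$b$c * Xop b (Dup eta c phi) m) = of_nat (mdeg m) * phi m"
  proof -
    have "(\<Sum>b\<in>UNIV. \<Sum>c\<in>UNIV. eta$b$c * Xop b (Dup eta c phi) m)
        = (\<Sum>b\<in>UNIV. Xop b (\<lambda>k. \<Sum>c\<in>UNIV. eta$b$c * Dup eta c phi k) m)"
      by (simp add: Xop_sum Xop_scale)
    also have "\<dots> = of_nat (mdeg m) * phi m" by (simp add: ED Euler0)
    finally show ?thesis .
  qed
  have T2: "(\<Sum>b\<in>UNIV. \<Sum>c\<in>UNIV. eta$b$c * Xop c (Dup eta b phi) m) = of_nat (mdeg m) * phi m"
  proof -
    have "(\<Sum>b\<in>UNIV. \<Sum>c\<in>UNIV. eta$b$c * Xop c (Dup eta b phi) m)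
       = (\<Sum>c\<in>UNIV. \<Sum>b\<in>UNIV. eta$c$b * Xop c (Dup eta b phi) m)"
      by (subst sum.swap) (simp add: symE)
    then show ?thesis using T1 by simp
  qed
  have T3: "(\<Sum>b\<in>UNIV. \<Sum>c\<in>UNIV. eta$b$c * (matrix_inv eta $ b $ c * phi m)) = of_nat CARD('n) * phi m"
  proof -
    have e: "\<And>b c. eta$b$c * (matrix_inv eta $ b $ c * phi m) = (eta$b$c * matrix_inv eta $ c $ b) * phi m"
      using symI by (metis mult.assoc)
    have "(\<Sum>b\<in>UNIV. \<Sum>c\<in>UNIV. eta$b$c * (matrix_inv eta $ b $ c * phi m))
       = (\<Sum>b\<in>UNIV. \<Sum>c\<in>UNIV. (eta$b$c * matrix_inv eta $ c $ b) * phi m)"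
      by (simp only: e)
    also have "\<dots> = (\<Sum>b\<in>UNIV. (\<Sum>c\<in>UNIV. eta$b$c * matrix_inv eta $ c $ b) * phi m)"
      by (simp only: sum_distrib_right)
    also have "\<dots> = (\<Sum>b\<in>(UNIV::'n set). phi m)" by (simp add: E1)
    also have "\<dots> = of_nat CARD('n) * phi m" by simp
    finally show ?thesis .
  qed
  have "Lap eta (Qop eta phi) m = (\<Sum>b\<in>UNIV. \<Sum>c\<in>UNIV. eta$b$c * Lap eta (Xop b (Xop c phi)) m)"
    by (simp add: Qop_def Lap_sum Lap_scale)
  also have "\<dots> = 2 * (\<Sum>b\<in>UNIV. \<Sum>c\<in>UNIV. eta$b$c * Xop b (Dup eta c phi) m)
      + 2 * (\<Sum>b\<in>UNIV. \<Sum>c\<in>UNIV. eta$b$c * Xop c (Dup eta b phi) m)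
      + 2 * (\<Sum>b\<in>UNIV. \<Sum>c\<in>UNIV. eta$b$c * (matrix_inv eta $ b $ c * phi m))"
    by (simp add: LXX distrib_left sum.distrib sum_distrib_left mult_ac)
  also have "\<dots> = 2 * (of_nat (mdeg m) * phi m) + 2 * (of_nat (mdeg m) * phi m) + 2 * (of_nat CARD('n) * phi m)"
    by (simp only: T1 T2 T3)
  also have "\<dots> = (2 * of_nat CARD('n) + 4 * of_nat (mdeg m)) * phi m"
    by (simp add: algebra_simps)
  finally show "Lap eta (Qop eta phi) m = (2 * of_nat CARD('n) + 4 * of_nat (mdeg m)) * phi m" .
qed




lemma polys_scale: "f \<in> polys \<Longrightarrow> (\<lambda>m. h m * f m) \<in> polys"
  unfolding polys_def by (auto elim: rev_finite_subset)

lemma polys_add: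
  assumes "f \<in> polys" "g \<in> polys" shows "(\<lambda>m. f m + g m) \<in> polys"
proof -
  have "finite ({m. f m \<noteq> 0} \<union> {m. g m \<noteq> 0})" using assms by (simp add: polys_def)
  moreover have "{m. f m + g m \<noteq> 0} \<subseteq> {m. f m \<noteq> 0} \<union> {m. g m \<noteq> 0}" by auto
  ultimately have "finite {m. f m + g m \<noteq> 0}" using finite_subset by blast
  then show ?thesis by (simp add: polys_def)
qed

lemma polys_sum: "(\<And>i. i \<in> A \<Longrightarrow> F i \<in> polys) \<Longrightarrow> (\<lambda>m. \<Sum>i\<in>A. F i m) \<in> polys"
proof (cases "finite A")
  case True
  assume F: "\<And>i. i \<in> A \<Longrightarrow> F i \<in> polys"
  have "{m. (\<Sum>i\<in>A. F i m) \<noteq> 0} \<subseteq> (\<Union>i\<in>A. {m. F i m \<noteq> 0})"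
    by (auto intro: ccontr)
  moreover have "finite (\<Union>i\<in>A. {m. F i m \<noteq> 0})"
    using True F by (auto simp: polys_def)
  ultimately show ?thesis unfolding polys_def by (auto elim: rev_finite_subset)
next
  case False
  then show ?thesis by (simp add: polys_def)
qed

lemma polys_Dop: "f \<in> polys \<Longrightarrow> Dop a f \<in> polys"
proof -
  assume f: "f \<in> polys"
  have "{m. Dop a f m \<noteq> 0} \<subseteq> (\<lambda>k. k(a := k a - 1)) ` {m. f m \<noteq> 0}"
  proof
    fix m assume "m \<in> {m. Dop a f m \<noteq> 0}"
    then have "f (m(a := m a + 1)) \<noteq> 0" by (simp add: Dop_def)
    then show "m \<in> (\<lambda>k. k(a := k a - 1)) ` {m. f m \<noteq> 0}"
      by (intro image_eqI[of _ _ "m(a := m a + 1)"]) auto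
  qed
  moreover have "finite ((\<lambda>k. k(a := k a - 1)) ` {m. f m \<noteq> 0})" using f by (simp add: polys_def)
  ultimately have "finite {m. Dop a f m \<noteq> 0}" using finite_subset by blast
  then show ?thesis by (simp add: polys_def)
qed

lemma polys_Xop: "f \<in> polys \<Longrightarrow> Xop a f \<in> polys"
proof -
  assume f: "f \<in> polys"
  have "{m. Xop a f m \<noteq> 0} \<subseteq> (\<lambda>k. k(a := k a + 1)) ` {m. f m \<noteq> 0}"
  proof
    fix m assume "m \<in> {m. Xop a f m \<noteq> 0}"
    then have "0 < m a" "f (m(a := m a - 1)) \<noteq> 0" by (auto simp: Xop_def split: if_splits)
    then show "m \<in> (\<lambda>k. k(a := k a + 1)) ` {m. f m \<noteq> 0}"
      by (intro image_eqI[of _ _ "m(a := m a - 1)"]) auto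
  qed
  moreover have "finite ((\<lambda>k. k(a := k a + 1)) ` {m. f m \<noteq> 0})" using f by (simp add: polys_def)
  ultimately have "finite {m. Xop a f m \<noteq> 0}" using finite_subset by blast
  then show ?thesis by (simp add: polys_def)
qed

lemma polys_Dup: "f \<in> polys \<Longrightarrow> Dup eta a f \<in> polys"
  unfolding Dup_def by (intro polys_sum polys_scale polys_Dop)

lemma polys_Qop: "f \<in> polys \<Longrightarrow> Qop eta f \<in> polys"
  unfolding Qop_def by (intro polys_sum polys_scale polys_Xop)

lemma polys_R2: "f \<in> polys \<Longrightarrow> R2H4inv f \<in> polys"
  unfolding R2_eq by (intro polys_scale)

lemma polys_Xtil: "f \<in> polys \<Longrightarrow> Xtil eta a f \<in> polys"
  unfolding Xtil_def by (intro polys_add polys_Xop polys_R2 polys_Qop polys_Dup)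

lemma Fplus_iff: "f \<in> Fplus eta \<longleftrightarrow> f \<in> polys \<and> Lap eta f = (\<lambda>m. 0)"
  by (simp add: Fplus_def)

lemma Fplus_Dop: "f \<in> Fplus eta \<Longrightarrow> Dop a f \<in> Fplus eta"
  by (simp add: Fplus_iff polys_Dop Lap_Dop Dop_zero)

lemma Fplus_degscale: "f \<in> Fplus eta \<Longrightarrow> (\<lambda>m. s (mdeg m) * f m) \<in> Fplus eta"
  by (simp add: Fplus_iff polys_scale Lap_degscale)

lemma Fplus_Hop:
  fixes f :: "'n::finite coeffs"
  shows "f \<in> Fplus eta \<Longrightarrow> Hop f \<in> Fplus eta"
  unfolding Hop_eq by (rule Fplus_degscale[of _ _ "\<lambda>d. - (of_nat d + of_nat CARD('n) / 2)"])

lemma Fplus_Dup: "f \<in> Fplus eta \<Longrightarrow> Dup eta a f \<in> Fplus eta"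
proof -
  assume f: "f \<in> Fplus eta"
  then have "\<And>b. Lap eta (Dop b f) = (\<lambda>m. 0)" using Fplus_Dop Fplus_iff by blast
  then have l: "Lap eta (Dup eta a f) = (\<lambda>m. 0)" by (simp add: Dup_def Lap_sum Lap_scale)
  have p: "Dup eta a f \<in> polys" using f by (simp add: Fplus_iff polys_Dup)
  show ?thesis by (simp add: Fplus_iff p l)
qed




lemma Fplus_Xtil:
  fixes eta :: "complex^'n::finite^'n"
  assumes E1: "\<And>b d. (\<Sum>c\<in>UNIV. eta$b$c * matrix_inv eta$c$d) = (if b = d then 1 else 0)"
    and symI: "\<And>a b. matrix_inv eta$a$b = matrix_inv eta$b$a"
    and symE: "\<And>a b. eta$a$b = eta$b$a"
    and f: "f \<in> Fplus eta"
  shows "Xtil eta c f \<in> Fplus eta"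
proof -
  have fp: "f \<in> polys" and harm: "Lap eta f = (\<lambda>m. 0)" using f by (auto simp: Fplus_iff)
  define phi where "phi = Dup eta c f"
  have ph: "Lap eta phi = (\<lambda>m. 0)" using Fplus_Dup[OF f] by (simp add: Fplus_iff phi_def)
  have LQ: "Lap eta (Qop eta phi) = (\<lambda>m. (2 * of_nat CARD('n) + 4 * of_nat (mdeg m)) * phi m)"
    by (rule Lap_Q[OF E1 symI symE ph])
  have LR: "Lap eta (R2H4inv (Qop eta phi)) = (\<lambda>m. (1 / (4 - 2 * of_nat (mdeg m + 2) - of_nat CARD('n))) * Lap eta (Qop eta phi) m)"
    unfolding R2_eq[of "Qop eta phi"]
    by (rule Lap_degscale[of _ "\<lambda>d. 1 / (4 - 2 * of_nat d - of_nat CARD('n))"])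
  have LXf: "Lap eta (Xop c f) = (\<lambda>m. 2 * phi m)"
    by (simp add: Lap_Xop[OF symI] harm Xop_zero phi_def)
  have "Lap eta (Xtil eta c f) = (\<lambda>m. 0)"
  proof
    fix m :: "'n \<Rightarrow> nat"
    have "0 < CARD('n)" by (rule finite_UNIV_card_ge_0) simp
    have nz: "(2 * of_nat (mdeg m) + of_nat CARD('n) :: complex) \<noteq> 0"
    proof
      assume eq: "(2 * of_nat (mdeg m) + of_nat CARD('n) :: complex) = 0"
      have "of_nat (2 * mdeg m + CARD('n)) = (0::complex)" using eq by simp
      then have "2 * mdeg m + CARD('n) = 0" by (simp only: of_nat_eq_0_iff)
      with \<open>0 < CARD('n)\<close> show False by simp
    qed
    have "Lap eta (Xtil eta c f) m = 2 * phi m + (1 / (4 - 2 * (of_nat (mdeg m) + 2) - of_nat CARD('n))) * ((2 * of_nat CARD('n) + 4 * of_nat (mdeg m)) * phi m)"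
      by (simp add: Xtil_def phi_def[symmetric] Lap_add LR LQ LXf)
    also have "\<dots> = 0"
    proof -
      have den: "(4 - 2 * (of_nat (mdeg m) + 2) - of_nat CARD('n) :: complex) = - (2 * of_nat (mdeg m) + of_nat CARD('n))"
        by (simp add: algebra_simps)
      have e: "(2 * of_nat CARD('n) + 4 * of_nat (mdeg m) :: complex) = 2 * (2 * of_nat (mdeg m) + of_nat CARD('n))"
        by (simp add: algebra_simps)
      have aux: "\<And>(X::complex) p. X \<noteq> 0 \<Longrightarrow> 2 * p + 1 / (- X) * (2 * X * p) = 0"
        by (simp add: field_simps)
      show ?thesis unfolding den e by (rule aux[OF nz])
    qed
    finally show "Lap eta (Xtil eta c f) m = 0" .
  qed
  then show ?thesis using fp by (simp add: Fplus_iff polys_Xtil)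
qed

lemma Euler:
  assumes harm: "Lap eta f = (\<lambda>m. 0)"
  shows "(\<lambda>m. \<Sum>a\<in>UNIV. Xtil eta a (Dop a f) m) = (\<lambda>m. of_nat (mdeg m) * f m)"
proof -
  have L: "(\<lambda>k. \<Sum>a\<in>UNIV. Dup eta a (Dop a f) k) = Lap eta f"
    unfolding Dup_def Lap_def
    by (rule ext, rule sum.cong[OF refl], rule sum.cong[OF refl]) (metis DD)
  have "(\<lambda>m. \<Sum>a\<in>UNIV. R2H4inv (Qop eta (Dup eta a (Dop a f))) m) = R2H4inv (Qop eta (\<lambda>k. \<Sum>a\<in>UNIV. Dup eta a (Dop a f) k))"
    by (simp add: R2_sum Qop_sum)
  also have "\<dots> = (\<lambda>m. 0)" by (simp add: L harm Qop_zero R2H4inv_def)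
  finally have 0: "(\<lambda>m. \<Sum>a\<in>UNIV. R2H4inv (Qop eta (Dup eta a (Dop a f))) m) = (\<lambda>m. 0)" .
  show ?thesis
  proof
    fix m
    have "(\<Sum>a\<in>UNIV. Xtil eta a (Dop a f) m) = (\<Sum>a\<in>UNIV. Xop a (Dop a f) m) + (\<Sum>a\<in>UNIV. R2H4inv (Qop eta (Dup eta a (Dop a f))) m)"
      by (simp add: Xtil_def sum.distrib)
    also have "\<dots> = of_nat (mdeg m) * f m" using fun_cong[OF 0, of m] by (simp add: Euler0)
    finally show "(\<Sum>a\<in>UNIV. Xtil eta a (Dop a f) m) = of_nat (mdeg m) * f m" .
  qed
qed




definition bnd :: "nat \<Rightarrow> ('n::finite) coeffs \<Rightarrow> bool" where
  "bnd d f \<longleftrightarrow> (\<forall>m. f m \<noteq> 0 \<longrightarrow> mdeg m < d)"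

lemma polys_bnd: "f \<in> polys \<Longrightarrow> \<exists>d. bnd d f"
proof -
  assume "f \<in> polys"
  then have "finite (mdeg ` {m. f m \<noteq> 0})" by (simp add: polys_def)
  then obtain d where "\<forall>n\<in>mdeg ` {m. f m \<noteq> 0}. n < d" using finite_nat_set_iff_bounded by blast
  then show ?thesis unfolding bnd_def by auto
qed

lemma mdeg_0: "mdeg m = 0 \<longleftrightarrow> m = (\<lambda>_. 0)"
  by (auto simp: mdeg_def fun_eq_iff)

lemma csub_sum:
  assumes W: "csubspace W" and fin: "finite A"
  shows "(\<forall>i\<in>A. F i \<in> W) \<Longrightarrow> (\<lambda>m. \<Sum>i\<in>A. F i m) \<in> W"
  using fin
proof (induction A rule: finite_induct)
  case empty
  then show ?case using W by (simp add: csubspace_def)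
next
  case (insert x A)
  then show ?case using W unfolding csubspace_def by simp
qed




lemma irreducible_part:
  fixes eta :: "complex^'n::finite^'n"
  assumes E1: "\<And>b d. (\<Sum>c\<in>UNIV. eta$b$c * matrix_inv eta$c$d) = (if b = d then 1 else 0)"
    and symI: "\<And>a b. matrix_inv eta$a$b = matrix_inv eta$b$a"
    and symE: "\<And>a b. eta$a$b = eta$b$a"
    and WF: "W \<subseteq> Fplus eta" and W: "csubspace W" and cl: "\<forall>T\<in>Zalg eta. \<forall>f\<in>W. T f \<in> W"
  shows "W = {\<lambda>m. 0} \<or> W = Fplus eta"
proof (cases "W \<subseteq> {\<lambda>m. 0}")
  case True
  then show ?thesis using W by (auto simp: csubspace_def)
next
  case False
  then obtain f0 where f0: "f0 \<in> W" "f0 \<noteq> (\<lambda>m. 0)" by auto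
  have zW: "(\<lambda>m. 0) \<in> W" using W by (simp add: csubspace_def)
  have addW: "\<And>f g. f \<in> W \<Longrightarrow> g \<in> W \<Longrightarrow> (\<lambda>m. f m + g m) \<in> W" using W by (simp add: csubspace_def)
  have smW: "\<And>k f. f \<in> W \<Longrightarrow> (\<lambda>m. k * f m) \<in> W" using W by (simp add: csubspace_def)
  have clD: "\<And>a f. f \<in> W \<Longrightarrow> Dop a f \<in> W" using cl Zalg.gen_D by blast
  have clX: "\<And>a f. f \<in> W \<Longrightarrow> Xtil eta a f \<in> W" using cl Zalg.gen_X by blast
  have Wp: "\<And>f. f \<in> W \<Longrightarrow> f \<in> polys" using WF by (auto simp: Fplus_iff)
  define z :: "'n \<Rightarrow> nat" where "z = (\<lambda>_. 0)"
  define S where "S = {d. \<exists>f\<in>W. f \<noteq> (\<lambda>m. 0) \<and> bnd d f}"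
  obtain d0 where "bnd d0 f0" using polys_bnd[OF Wp[OF f0(1)]] by blast
  then have "d0 \<in> S" using f0 by (auto simp: S_def)
  define N where "N = (LEAST d. d \<in> S)"
  have "N \<in> S" unfolding N_def by (rule LeastI) fact
  then obtain f where f: "f \<in> W" "f \<noteq> (\<lambda>m. 0)" "bnd N f" by (auto simp: S_def)
  have supp: "m = z" if fm: "f m \<noteq> 0" for m
  proof (rule ccontr)
    assume mz: "m \<noteq> z"
    then obtain a where ma: "m a \<noteq> 0" by (auto simp: z_def fun_eq_iff)
    have mN: "mdeg m < N" using f(3) fm by (auto simp: bnd_def)
    define g where "g = Dop a f"
    have gW: "g \<in> W" using clD f(1) by (simp add: g_def)
    have "g (m(a := m a - 1)) = of_nat (m a) * f m"
      using ma by (cases "m a") (simp_all add: g_def Dop_def fun_upd_idem)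
    then have "g (m(a := m a - 1)) \<noteq> 0" using ma fm by simp
    then have "g \<noteq> (\<lambda>m. 0)" by auto
    moreover have "bnd (N - 1) g"
      unfolding bnd_def
    proof (intro allI impI)
      fix k assume "g k \<noteq> 0"
      then have "f (k(a := k a + 1)) \<noteq> 0" by (simp add: g_def Dop_def)
      then have "mdeg (k(a := k a + 1)) < N" using f(3) by (auto simp: bnd_def)
      then show "mdeg k < N - 1" by (simp add: mdeg_Suc mdeg_Suc')
    qed
    ultimately have "N - 1 \<in> S" using gW by (auto simp: S_def)
    then have "(LEAST d. d \<in> S) \<le> N - 1" by (rule Least_le)
    then have "N \<le> N - 1" by (simp add: N_def[symmetric])
    then show False using mN by simp
  qed
  have fz: "f z \<noteq> 0"
  proof
    assume fz0: "f z = 0"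
    have "f = (\<lambda>m. 0)"
    proof
      fix m show "f m = 0" using supp fz0 by (cases "m = z") auto
    qed
    then show False using f(2) by simp
  qed
  define del :: "'n coeffs" where "del = (\<lambda>m. if m = z then 1 else 0)"
  have deq: "del = (\<lambda>m. (1 / f z) * f m)"
  proof
    fix m
    show "del m = (1 / f z) * f m"
    proof (cases "m = z")
      case True
      then show ?thesis using fz by (simp add: del_def)
    next
      case False
      then have "f m = 0" using supp by blast
      then show ?thesis using False by (simp add: del_def)
    qed
  qed
  have delW: "del \<in> W" unfolding deq by (rule smW[OF f(1)])
  have ind: "\<forall>f\<in>Fplus eta. bnd d f \<longrightarrow> f \<in> W" for d
  proof (induction d)
    case 0
    show ?case
    proof (intro ballI impI)
      fix f :: "'n coeffs" assume "bnd 0 f"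
      then have "f = (\<lambda>m. 0)" by (auto simp: bnd_def fun_eq_iff)
      then show "f \<in> W" using zW by simp
    qed
  next
    case (Suc d)
    show ?case
    proof (intro ballI impI)
      fix f assume fF: "f \<in> Fplus eta" and fb: "bnd (Suc d) f"
      show "f \<in> W"
      proof (cases "d = 0")
        case True
        have "f m = f z * del m" for m
        proof (cases "m = z")
          case True
          then show ?thesis by (simp add: del_def)
        next
          case False
          have "f m = 0"
          proof (rule ccontr)
            assume "f m \<noteq> 0"
            then have "mdeg m < Suc d" using fb by (auto simp: bnd_def)
            with \<open>d = 0\<close> have "m = z" by (simp add: mdeg_0 z_def)
            with False show False by simp
          qed
          then show ?thesis using False by (simp add: del_def)
        qed
        then have feq: "f = (\<lambda>m. f z * del m)" by (rule ext)
        show ?thesis by (subst feq) (rule smW[OF delW])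
      next
        case False
        have harm: "Lap eta f = (\<lambda>m. 0)" using fF by (simp add: Fplus_iff)
        have DW: "\<And>a. Dop a f \<in> W"
        proof -
          fix a
          have "bnd d (Dop a f)" unfolding bnd_def
          proof (intro allI impI)
            fix k assume "Dop a f k \<noteq> 0"
            then have "f (k(a := k a + 1)) \<noteq> 0" by (simp add: Dop_def)
            then have "mdeg (k(a := k a + 1)) < Suc d" using fb by (auto simp: bnd_def)
            then show "mdeg k < d" by (simp add: mdeg_Suc mdeg_Suc')
          qed
          then show "Dop a f \<in> W" using Suc.IH Fplus_Dop[OF fF] by blast
        qed
        have "(\<lambda>m. \<Sum>a\<in>UNIV. Xtil eta a (Dop a f) m) \<in> W"
          by (intro csub_sum[OF W] ballI clX DW) simp
        then have EW: "(\<lambda>m. of_nat (mdeg m) * f m) \<in> W" using Euler[OF harm] by simp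
        define g where "g = (\<lambda>m. (of_nat (mdeg m) - of_nat d) * f m)"
        have "g \<in> Fplus eta" unfolding g_def
          by (rule Fplus_degscale[OF fF, of "\<lambda>t. of_nat t - of_nat d"])
        moreover have "bnd d g" using fb by (auto simp: bnd_def g_def)
        ultimately have gW: "g \<in> W" using Suc.IH by blast
        have feq: "f = (\<lambda>m. (1 / of_nat d) * ((of_nat (mdeg m) * f m) + (-1) * g m))"
          using False by (auto simp: g_def fun_eq_iff field_simps)
        have "(\<lambda>m. (-1) * g m) \<in> W" by (rule smW[OF gW])
        then have X: "(\<lambda>m. of_nat (mdeg m) * f m + (-1) * g m) \<in> W"
          by (rule addW[OF EW])
        show ?thesis by (subst feq) (rule smW[OF X])
      qed
    qed
  qed
  have "Fplus eta \<subseteq> W"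
  proof
    fix f assume "f \<in> Fplus eta"
    moreover obtain d where "bnd d f" using polys_bnd \<open>f \<in> Fplus eta\<close> by (auto simp: Fplus_iff)
    ultimately show "f \<in> W" using ind by blast
  qed
  then show ?thesis using WF by blast
qed




theorem mainTheorem10:
  fixes eta :: "complex^'n::finite^'n"
  assumes "CARD('n) \<ge> 3"
    and "invertible eta"
    and "transpose eta = eta"
  shows "(\<forall>f\<in>Fplus eta. Hop f \<in> Fplus eta)
       \<and> (\<forall>a. \<forall>f\<in>Fplus eta. Dop a f \<in> Fplus eta)
       \<and> (\<forall>a. \<forall>f\<in>Fplus eta. Xtil eta a f \<in> Fplus eta)
       \<and> (\<forall>W. W \<subseteq> Fplus eta \<and> csubspace W \<and> (\<forall>T\<in>Zalg eta. \<forall>f\<in>W. T f \<in> W)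
              \<longrightarrow> W = {\<lambda>m. 0} \<or> W = Fplus eta)"
proof -
  note I = inv_facts[OF assms(2,3)]
  show ?thesis
  proof (intro conjI allI ballI impI)
    fix f assume "f \<in> Fplus eta" then show "Hop f \<in> Fplus eta" by (rule Fplus_Hop)
  next
    fix a f assume "f \<in> Fplus eta" then show "Dop a f \<in> Fplus eta" by (rule Fplus_Dop)
  next
    fix a f assume "f \<in> Fplus eta" then show "Xtil eta a f \<in> Fplus eta" by (rule Fplus_Xtil[OF I])
  next
    fix W assume H: "W \<subseteq> Fplus eta \<and> csubspace W \<and> (\<forall>T\<in>Zalg eta. \<forall>f\<in>W. T f \<in> W)"
    show "W = {\<lambda>m. 0} \<or> W = Fplus eta"
      using H by (intro irreducible_part[OF I]) auto
  qed
qed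



end
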